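(* Let $G$ be a countable group, and identify $\mathbf{P}_G$ with $\{0,1\}^G$ with the product topology. Then the family of all sparse subsets of $G$ is a coanalytic subset of $\mathbf{P}_G$, and the family of all $P$-small subsets of $G$ is an analytic subset of $\mathbf{P}_G$.
   Context: $\mathbf{P}_G$ is the power set of $G$, identified with $\{0,1\}^G$ via characteristic functions (a Polish space when $G$ is countable). A subset $A\subseteq G$ is sparse if for every infinite subset $X\subseteq G$ there is a finite subset $F\subseteq X$ such that $\bigcap_{g\in F}gA$ is finite. $A$ is $P$-small if there is an injective sequence $(g_n)_{n\in\omega}$ in $G$ such that the sets $g_nA$, $n\in\omega$, are pairwise disjoint. A subset of a Polish space is analytic if it is a continuous image of a Polish space, and coanalytic if its complement is analytic. *)

theory Defs
  imports "HOL-Analysis.Analysis" "HOL-Algebra.Coset"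
begin

definition Polish_top :: "'b topology \<Rightarrow> bool" where
  "Polish_top Y \<longleftrightarrow> completely_metrizable_space Y \<and> separable_space Y"

text \<open>Every Polish space has cardinality at most the continuum, so it is homeomorphic to a
  topology on a subset of the type nat => real; hence quantifying over Polish topologies
  on that type loses no generality.\<close>
definition analytic_in :: "'a topology \<Rightarrow> 'a set \<Rightarrow> bool" where
  "analytic_in X S \<longleftrightarrow>
     (\<exists>(Y :: (nat \<Rightarrow> real) topology) f.
        Polish_top Y \<and> continuous_map Y X f \<and> f ` topspace Y = S)"

definition coanalytic_in :: "'a topology \<Rightarrow> 'a set \<Rightarrow> bool" where
  "coanalytic_in X S \<longleftrightarrow> S \<subseteq> topspace X \<and> analytic_in X (topspace X - S)"

definition PG_top :: "('a, 'm) monoid_scheme \<Rightarrow> ('a \<Rightarrow> bool) topology" where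
  "PG_top G = product_topology (\<lambda>_. discrete_topology (UNIV :: bool set)) (carrier G)"

definition set_of_char :: "('a, 'm) monoid_scheme \<Rightarrow> ('a \<Rightarrow> bool) \<Rightarrow> 'a set" where
  "set_of_char G c = {g \<in> carrier G. c g}"

definition sparse :: "('a, 'm) monoid_scheme \<Rightarrow> 'a set \<Rightarrow> bool" where
  "sparse G A \<longleftrightarrow> A \<subseteq> carrier G \<and>
     (\<forall>X. X \<subseteq> carrier G \<and> infinite X \<longrightarrow>
        (\<exists>F. F \<subseteq> X \<and> finite F \<and> F \<noteq> {} \<and> finite (\<Inter>g\<in>F. g <#\<^bsub>G\<^esub> A)))"

definition P_small :: "('a, 'm) monoid_scheme \<Rightarrow> 'a set \<Rightarrow> bool" where
  "P_small G A \<longleftrightarrow> A \<subseteq> carrier G \<and>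
     (\<exists>g :: nat \<Rightarrow> 'a. inj g \<and> range g \<subseteq> carrier G \<and>
        (\<forall>n m. n \<noteq> m \<longrightarrow> (g n <#\<^bsub>G\<^esub> A) \<inter> (g m <#\<^bsub>G\<^esub> A) = {}))"

end

theory Submission
  imports Defs
begin

lemma second_countable_top_of_set:
  "second_countable (top_of_set (S::'a::second_countable_topology set))"
proof -
  obtain \<B> :: "'a set set" where B: "countable \<B>" "{} \<notin> \<B>"
          "\<And>C. C \<in> \<B> \<Longrightarrow> openin(top_of_set S) C"
          "\<And>T. openin(top_of_set S) T \<Longrightarrow> \<exists>\<U>. \<U> \<subseteq> \<B> \<and> T = \<Union>\<U>"
    using subset_second_countable[of S] by blast
  show ?thesis unfolding second_countable_def
  proof (intro exI conjI ballI allI impI)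
    show "countable \<B>" by (rule B(1))
  next
    fix V assume "V \<in> \<B>" then show "openin (top_of_set S) V" by (rule B(3))
  next
    fix U x assume "openin (top_of_set S) U \<and> x \<in> U"
    then obtain \<U> where "\<U> \<subseteq> \<B>" "U = \<Union>\<U>" "x \<in> U" using B(4) by blast
    then show "\<exists>V\<in>\<B>. x \<in> V \<and> V \<subseteq> U" by blast
  qed
qed

lemma analytic_closed:
  fixes T :: "(nat \<Rightarrow> real) set"
  assumes clT: "closed T" and cont: "continuous_map (top_of_set T) X f" and img: "f ` T = S"
  shows "analytic_in X S"
proof -
  have E: "completely_metrizable_space (euclidean :: (nat \<Rightarrow> real) topology)"
    using completely_metrizable_space_euclidean[where 'a="nat\<Rightarrow>real"] .
  have C: "closedin euclidean T" using clT unfolding closed_closedin .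
  have cm: "completely_metrizable_space (top_of_set T)"
    using completely_metrizable_space_closedin[OF E C] .
  have sp: "separable_space (top_of_set T)"
    by (rule second_countable_imp_separable_space[OF second_countable_top_of_set])
  have "Polish_top (top_of_set T)" unfolding Polish_top_def using cm sp by (rule conjI)
  moreover have "f ` topspace (top_of_set T) = S" using img by simp
  ultimately show ?thesis unfolding analytic_in_def using cont by blast
qed

definition Nr :: "real set" where "Nr = range real"

lemma nat_dist_lt1: "\<bar>real b - real a\<bar> < 1 \<Longrightarrow> a = b"
proof (rule ccontr)
  assume h: "\<bar>real b - real a\<bar> < 1" "a \<noteq> b"
  show False
  proof (cases "a < b")
    case True
    then have "real a + 1 \<le> real b" by linarith
    then show False using h(1) by linarith
  next
    case False
    then have "real b + 1 \<le> real a" using h(2) by linarith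
    then show False using h(1) by linarith
  qed
qed

lemma closed_Nr_subset: "C \<subseteq> Nr \<Longrightarrow> closed C"
proof (rule discrete_imp_closed[of 1])
  assume C: "C \<subseteq> Nr"
  show "\<forall>x\<in>C. \<forall>y\<in>C. dist y x < 1 \<longrightarrow> y = x"
  proof (intro ballI impI)
    fix x y assume xy: "x \<in> C" "y \<in> C" "dist y x < 1"
    obtain a where a: "x = real a" using xy(1) C by (auto simp: Nr_def)
    obtain b where b: "y = real b" using xy(2) C by (auto simp: Nr_def)
    have "\<bar>real b - real a\<bar> < 1" using xy(3) a b by (simp only: dist_real_def)
    then show "y = x" using nat_dist_lt1 a b by blast
  qed
qed simp

lemma Nr_eventually_eq:
  assumes "\<And>n. x n \<in> Nr" "x \<longlonglongrightarrow> l"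
  shows "l \<in> Nr \<and> (\<forall>\<^sub>F n in sequentially. x n = l)"
proof -
  have "l \<in> Nr" using closed_Nr_subset[of Nr] assms
    by (meson closed_sequentially order_refl)
  then obtain k where l: "l = real k" by (auto simp: Nr_def)
  have "\<forall>\<^sub>F n in sequentially. dist (x n) l < 1"
    using assms(2) by (simp add: tendsto_iff)
  then have "\<forall>\<^sub>F n in sequentially. x n = l"
  proof (rule eventually_mono)
    fix n assume "dist (x n) l < 1"
    moreover obtain j where "x n = real j" using assms(1)[of n] by (auto simp: Nr_def)
    ultimately show "x n = l" using l by (auto simp: dist_real_def)
  qed
  with \<open>l \<in> Nr\<close> show ?thesis by blast
qed

lemma closed_fin:
  fixes R :: "'q \<Rightarrow> (nat \<Rightarrow> real) \<Rightarrow> bool"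
  assumes fin: "\<And>q. finite (J q)"
    and dep: "\<And>q y y'. (\<And>i. i \<in> J q \<Longrightarrow> y i = y' i) \<Longrightarrow> R q y \<Longrightarrow> R q y'"
  shows "closed {y. (\<forall>i. y i \<in> Nr) \<and> (\<forall>q. R q y)}"
  unfolding closed_sequential_limits
proof (intro allI impI, elim conjE)
  fix x l assume xs: "\<forall>n. x n \<in> {y. (\<forall>i. y i \<in> Nr) \<and> (\<forall>q. R q y)}" and lim: "x \<longlonglongrightarrow> l"
  have ev: "l i \<in> Nr \<and> (\<forall>\<^sub>F n in sequentially. x n i = l i)" for i
  proof -
    have co: "continuous_on UNIV (\<lambda>y::nat\<Rightarrow>real. y i)"
      by (rule continuous_on_product_coordinates)
    have ci: "isCont (\<lambda>y::nat\<Rightarrow>real. y i) l"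
      using co continuous_on_eq_continuous_at[OF open_UNIV] by blast
    have t: "(\<lambda>n. x n i) \<longlonglongrightarrow> l i"
      using isCont_tendsto_compose[OF ci lim] .
    have xn: "\<And>n. x n i \<in> Nr" using xs by blast
    show ?thesis using Nr_eventually_eq[of "\<lambda>n. x n i", OF xn t] .
  qed
  show "l \<in> {y. (\<forall>i. y i \<in> Nr) \<and> (\<forall>q. R q y)}"
  proof (safe)
    fix i show "l i \<in> Nr" using ev[of i] by (rule conjunct1)
  next
    fix q
    have evs: "\<forall>i\<in>J q. \<forall>\<^sub>F n in sequentially. x n i = l i"
    proof
      fix i show "\<forall>\<^sub>F n in sequentially. x n i = l i" using ev[of i] by (rule conjunct2)
    qed
    have "\<forall>\<^sub>F n in sequentially. \<forall>i\<in>J q. x n i = l i"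
      using eventually_ball_finite[OF fin[of q] evs] .
    then obtain n where n: "\<forall>i\<in>J q. x n i = l i"
      using eventually_sequentially[of "\<lambda>n. \<forall>i\<in>J q. x n i = l i"] by blast
    have "R q (x n)" using xs by blast
    then show "R q l" using dep[of q "x n" l] n by blast
  qed
qed

lemma cont_coord:
  fixes T :: "(nat \<Rightarrow> real) set"
  assumes TN: "T \<subseteq> {y. \<forall>i. y i \<in> Nr}"
  shows "continuous_map (top_of_set T) (discrete_topology UNIV) (\<lambda>y. P (y j))"
  unfolding continuous_map_def
proof (intro conjI allI impI)
  fix U
  have eq: "T - {x \<in> T. P (x j) \<in> U} = T \<inter> {y. (\<forall>i. y i \<in> Nr) \<and> (\<forall>q::unit. P (y j) \<notin> U)}"
    using TN by auto
  have "closed {y. (\<forall>i. y i \<in> Nr) \<and> (\<forall>q::unit. P (y j) \<notin> U)}"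
    by (rule closed_fin[where J="\<lambda>_. {j}"]) auto
  then have "closedin (top_of_set T) (T - {x \<in> T. P (x j) \<in> U})"
    unfolding eq by (rule closedin_closed_Int)
  then show "openin (top_of_set T) {x \<in> topspace (top_of_set T). P (x j) \<in> U}"
    by (simp add: openin_closedin_eq)
qed auto

lemma cont_PG:
  fixes T :: "(nat \<Rightarrow> real) set"
  assumes TN: "T \<subseteq> {y. \<forall>i. y i \<in> Nr}"
  shows "continuous_map (top_of_set T) (PG_top G) (\<lambda>y g. if g \<in> carrier G then y (code g) = 1 else undefined)"
  unfolding PG_top_def continuous_map_componentwise
  using cont_coord[OF TN] by (auto simp: extensional_def)

definition nat_of :: "real \<Rightarrow> nat" where "nat_of r = nat \<lfloor>r\<rfloor>"

lemma nat_of_real[simp]: "nat_of (real n) = n" by (simp add: nat_of_def)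

lemma Nr_real[simp]: "real n \<in> Nr" by (simp add: Nr_def)

lemma Nr_eq: "r \<in> Nr \<Longrightarrow> r = real (nat_of r)" by (auto simp: Nr_def)

lemma topspace_PG: "topspace (PG_top G) = {c. c \<in> extensional (carrier G)}"
  by (auto simp: PG_top_def PiE_def)

lemma psmall_analytic:
  fixes G :: "('a, 'm) monoid_scheme" and e :: "nat \<Rightarrow> 'a"
  assumes grp: "group G" and e: "bij_betw e UNIV (carrier G)"
  shows "analytic_in (PG_top G) {c \<in> topspace (PG_top G). P_small G (set_of_char G c)}"
proof -
  interpret group G by (rule grp)
  define idx where "idx = inv_into UNIV e"
  have e_in: "e n \<in> carrier G" for n using e by (auto simp: bij_betw_def)
  have e_inj: "e n = e m \<longleftrightarrow> n = m" for n m using e by (auto simp: bij_betw_def inj_def)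
  have e_idx: "g \<in> carrier G \<Longrightarrow> e (idx g) = g" for g
    using e unfolding idx_def by (meson bij_betw_inv_into_right)
  have idx_e[simp]: "idx (e n) = n" for n
    using e unfolding idx_def by (simp add: bij_betw_def)
  define R where "R = (\<lambda>q (y::nat\<Rightarrow>real). case q of (n::nat,m::nat,uu::nat,vv::nat) \<Rightarrow> y(2 * uu+1) \<le> 1 \<and>
     (n \<noteq> m \<longrightarrow> y(2 * n) \<noteq> y(2 * m) \<and> (y(2 * uu+1) = 1 \<longrightarrow> y(2 * vv+1) = 1 \<longrightarrow>
        mult G (e (nat_of (y(2 * n)))) (e uu) \<noteq> mult G (e (nat_of (y(2 * m)))) (e vv))))"
  define T where "T = {y. (\<forall>i. y i \<in> Nr) \<and> (\<forall>q. R q y)}"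
  define f where "f = (\<lambda>(y::nat\<Rightarrow>real) g. if g \<in> carrier G then y ((\<lambda>g. 2 * idx g + 1) g) = 1 else undefined)"
  have clT: "closed T" unfolding T_def
    by (rule closed_fin[where J="\<lambda>(n,m,u,v). {2 * n,2 * m,2 * u+1,2 * v+1}"]) (auto simp: R_def)
  have cont: "continuous_map (top_of_set T) (PG_top G) f"
    unfolding f_def by (rule cont_PG) (auto simp: T_def)
  have "f ` T = {c \<in> topspace (PG_top G). P_small G (set_of_char G c)}"
  proof (intro equalityI subsetI)
    fix c assume "c \<in> f ` T"
    then obtain y where yT: "y \<in> T" and c: "c = f y" by auto
    have ctop: "c \<in> topspace (PG_top G)"
      using continuous_map_image_subset_topspace[OF cont] yT c by auto
    have yN: "y i \<in> Nr" for i using yT by (auto simp: T_def)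
    have yR: "R q y" for q using yT unfolding T_def by blast
    define g where "g = (\<lambda>n. e (nat_of (y (2 * n))))"
    have A: "set_of_char G c = {a \<in> carrier G. y (2 * idx a + 1) = 1}"
      by (auto simp: set_of_char_def c f_def)
    have "inj g"
    proof (rule injI)
      fix n m assume "g n = g m"
      then have "nat_of (y (2 * n)) = nat_of (y (2 * m))" by (simp add: g_def e_inj)
      then have "y (2 * n) = y (2 * m)" using Nr_eq[OF yN] by metis
      then show "n = m" using yR[of "(n,m,0,0)"] by (auto simp: R_def)
    qed
    moreover have "range g \<subseteq> carrier G" by (auto simp: g_def e_in)
    moreover have "(g n <#\<^bsub>G\<^esub> set_of_char G c) \<inter> (g m <#\<^bsub>G\<^esub> set_of_char G c) = {}" if "n \<noteq> m" for n m
    proof (rule ccontr)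
      assume "(g n <#\<^bsub>G\<^esub> set_of_char G c) \<inter> (g m <#\<^bsub>G\<^esub> set_of_char G c) \<noteq> {}"
      then obtain a b where a: "a \<in> carrier G" "y (2 * idx a + 1) = 1"
        and b: "b \<in> carrier G" "y (2 * idx b + 1) = 1" and eq: "g n \<otimes>\<^bsub>G\<^esub> a = g m \<otimes>\<^bsub>G\<^esub> b"
        unfolding A l_coset_def by auto
      show False using yR[of "(n,m,idx a,idx b)"] that a b eq
        by (auto simp: R_def e_idx g_def)
    qed
    ultimately show "c \<in> {c \<in> topspace (PG_top G). P_small G (set_of_char G c)}"
      using ctop unfolding P_small_def by (auto simp: set_of_char_def)
  next
    fix c assume cS: "c \<in> {c \<in> topspace (PG_top G). P_small G (set_of_char G c)}"
    then have ctop0: "c \<in> topspace (PG_top G)" and ps: "P_small G (set_of_char G c)" by blast+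
    have ctop: "c \<in> extensional (carrier G)" using ctop0 unfolding topspace_PG by blast
    from ps obtain g :: "nat \<Rightarrow> 'a" where ginj: "inj g" and grange: "range g \<subseteq> carrier G"
      and gdis: "\<And>n m. n \<noteq> m \<Longrightarrow> (g n <#\<^bsub>G\<^esub> set_of_char G c) \<inter> (g m <#\<^bsub>G\<^esub> set_of_char G c) = {}"
      unfolding P_small_def by blast
    define y where "y = (\<lambda>i::nat. if even i then real (idx (g (i div 2)))
        else if c (e (i div 2)) then 1 else (0::real))"
    have gin: "g n \<in> carrier G" for n using grange by auto
    have "y \<in> T" unfolding T_def
    proof (intro CollectI conjI allI)
      fix i show "y i \<in> Nr" unfolding y_def
        by (metis Nr_real of_nat_0 of_nat_1)
    next
      fix q :: "nat \<times> nat \<times> nat \<times> nat"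
      obtain n m u v where q: "q = (n,m,u,v)" by (cases q) auto
      have "idx (g n) \<noteq> idx (g m)" if "n \<noteq> m"
        using that ginj e_idx[OF gin[of n]] e_idx[OF gin[of m]] by (metis injD)
      moreover have "g n \<otimes>\<^bsub>G\<^esub> e u \<noteq> g m \<otimes>\<^bsub>G\<^esub> e v" if "n \<noteq> m" "c (e u)" "c (e v)"
      proof
        assume eq: "g n \<otimes>\<^bsub>G\<^esub> e u = g m \<otimes>\<^bsub>G\<^esub> e v"
        have inA: "e u \<in> set_of_char G c" "e v \<in> set_of_char G c"
          using that e_in by (auto simp: set_of_char_def)
        have m1: "g n \<otimes>\<^bsub>G\<^esub> e u \<in> (g n <#\<^bsub>G\<^esub> set_of_char G c)"
          unfolding l_coset_def using inA(1) by blast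
        have m2: "g n \<otimes>\<^bsub>G\<^esub> e u \<in> (g m <#\<^bsub>G\<^esub> set_of_char G c)"
          unfolding l_coset_def using inA(2) eq by blast
        from m1 m2 have "g n \<otimes>\<^bsub>G\<^esub> e u \<in> (g n <#\<^bsub>G\<^esub> set_of_char G c) \<inter> (g m <#\<^bsub>G\<^esub> set_of_char G c)"
          by (rule IntI)
        then show False using gdis[OF that(1)] by auto
      qed
      ultimately show "R q y" unfolding q R_def y_def
        by (auto simp: e_idx gin)
    qed
    moreover have "f y = c"
    proof
      fix a show "f y a = c a"
        using ctop by (auto simp: f_def y_def e_idx extensional_def)
    qed
    ultimately show "c \<in> f ` T" by blast
  qed
  then show ?thesis using analytic_closed[OF clT cont] by blast
qed

lemma div3_facts:
  "Suc (3 * i) div 3 = i" "Suc (3 * i) mod 3 = 1" "Suc (Suc (3 * i)) div 3 = i"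
  "Suc (Suc (3 * i)) mod 3 = 2" "(3 * i) div 3 = (i::nat)" "(3 * i) mod 3 = (0::nat)"
  by presburger+

lemma nonsparse_analytic:
  fixes G :: "('a, 'm) monoid_scheme" and e :: "nat \<Rightarrow> 'a"
  assumes grp: "group G" and e: "bij_betw e UNIV (carrier G)"
  shows "analytic_in (PG_top G) {c \<in> topspace (PG_top G). \<not> sparse G (set_of_char G c)}"
proof -
  interpret group G by (rule grp)
  define idx where "idx = inv_into UNIV e"
  have e_in: "e n \<in> carrier G" for n using e by (auto simp: bij_betw_def)
  have e_inj: "e n = e m \<longleftrightarrow> n = m" for n m using e by (auto simp: bij_betw_def inj_def)
  have e_idx: "g \<in> carrier G \<Longrightarrow> e (idx g) = g" for g
    using e unfolding idx_def by (meson bij_betw_inv_into_right)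
  have idx_e[simp]: "idx (e n) = n" for n
    using e unfolding idx_def by (simp add: bij_betw_def)
  define R where "R = (\<lambda>q (y::nat\<Rightarrow>real). case q of (i::nat,i'::nat,m::nat,k::nat,k'::nat,n::nat,u::nat) \<Rightarrow> y(3 * i) \<le> 1 \<and>
     (i \<noteq> i' \<longrightarrow> y(3 * i+1) \<noteq> y(3 * i'+1)) \<and>
     (k \<noteq> k' \<longrightarrow> y(3 * prod_encode(m,k)+2) \<noteq> y(3 * prod_encode(m,k')+2)) \<and>
     (n \<le> m \<longrightarrow> idx (mult G (m_inv G (e (nat_of (y(3 * n+1))))) (e (nat_of (y(3 * prod_encode(m,k)+2))))) = u
        \<longrightarrow> y (3 * u) = 1))"
  define T where "T = {y. (\<forall>i. y i \<in> Nr) \<and> (\<forall>q. R q y)}"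
  define f where "f = (\<lambda>(y::nat\<Rightarrow>real) g. if g \<in> carrier G then y ((\<lambda>g. 3 * idx g) g) = 1 else undefined)"
  have clT: "closed T" unfolding T_def
  proof (rule closed_fin[where J="\<lambda>(i,i',m,k,k',n,u). {3 * i,3 * i+1,3 * i'+1,3 * prod_encode(m,k)+2,
         3 * prod_encode(m,k')+2,3 * n+1,3 * u}"])
    fix q :: "nat \<times> nat \<times> nat \<times> nat \<times> nat \<times> nat \<times> nat"
    obtain i i' m k k' n u where q: "q = (i,i',m,k,k',n,u)" by (cases q) blast
    show "finite ((\<lambda>(i,i',m,k,k',n,u). {3 * i,3 * i+1,3 * i'+1,3 * prod_encode(m,k)+2,
         3 * prod_encode(m,k')+2,3 * n+1,3 * u}) q)" unfolding q by simp
  next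
    fix q :: "nat \<times> nat \<times> nat \<times> nat \<times> nat \<times> nat \<times> nat" and y y' :: "nat \<Rightarrow> real"
    assume h: "\<And>j. j \<in> (\<lambda>(i,i',m,k,k',n,u). {3 * i,3 * i+1,3 * i'+1,3 * prod_encode(m,k)+2,
         3 * prod_encode(m,k')+2,3 * n+1,3 * u}) q \<Longrightarrow> y j = y' j" and r: "R q y"
    obtain i i' m k k' n u where q: "q = (i,i',m,k,k',n,u)" by (cases q) blast
    have h1: "y (3 * i) = y' (3 * i)" "y (3 * i+1) = y' (3 * i+1)" "y (3 * i'+1) = y' (3 * i'+1)"
      "y (3 * prod_encode(m,k)+2) = y' (3 * prod_encode(m,k)+2)"
      "y (3 * prod_encode(m,k')+2) = y' (3 * prod_encode(m,k')+2)"
      "y (3 * n+1) = y' (3 * n+1)" "y (3 * u) = y' (3 * u)"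
      using h unfolding q by simp_all
    show "R q y'" using r unfolding q R_def prod.case h1 .
  qed
  have cont: "continuous_map (top_of_set T) (PG_top G) f"
    unfolding f_def by (rule cont_PG) (auto simp: T_def)
  have "f ` T = {c \<in> topspace (PG_top G). \<not> sparse G (set_of_char G c)}"
  proof (intro equalityI subsetI)
    fix c assume "c \<in> f ` T"
    then obtain y where yT: "y \<in> T" and c: "c = f y" by auto
    have ctop: "c \<in> topspace (PG_top G)"
      using continuous_map_image_subset_topspace[OF cont] yT c by auto
    have yN: "y i \<in> Nr" for i using yT by (auto simp: T_def)
    have yR: "R q y" for q using yT unfolding T_def by blast
    define A where "A = set_of_char G c"
    have A: "A = {a \<in> carrier G. y (3 * idx a) = 1}"
      by (auto simp: A_def set_of_char_def c f_def)
    define xs where "xs = (\<lambda>n. e (nat_of (y (3 * n+1))))"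
    define W where "W = (\<lambda>m k. e (nat_of (y (3 * prod_encode(m,k)+2))))"
    have "inj xs"
    proof (rule injI)
      fix n m assume "xs n = xs m"
      then have "nat_of (y (3 * n+1)) = nat_of (y (3 * m+1))" by (simp add: xs_def e_inj)
      then have "y (3 * n+1) = y (3 * m+1)" using Nr_eq[OF yN] by metis
      then show "n = m" using yR[of "(n,m,0,0,0,0,0)"] by (auto simp: R_def)
    qed
    have Winj: "inj (W m)" for m
    proof (rule injI)
      fix k k' assume "W m k = W m k'"
      then have "nat_of (y (3 * prod_encode(m,k)+2)) = nat_of (y (3 * prod_encode(m,k')+2))"
        by (simp add: W_def e_inj)
      then have "y (3 * prod_encode(m,k)+2) = y (3 * prod_encode(m,k')+2)" using Nr_eq[OF yN] by metis
      then show "k = k'" using yR[of "(0,0,m,k,k',0,0)"] by (auto simp: R_def)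
    qed
    have Wmem: "W m k \<in> xs n <#\<^bsub>G\<^esub> A" if "n \<le> m" for m k n
    proof -
      define a where "a = inv\<^bsub>G\<^esub> (xs n) \<otimes>\<^bsub>G\<^esub> W m k"
      have ac: "a \<in> carrier G" using e_in by (simp add: a_def xs_def W_def)
      have "y (3 * idx a) = 1" using yR[of "(0,0,m,k,0,n,idx a)"] that
        by (simp add: R_def a_def xs_def W_def)
      then have "a \<in> A" using A ac by auto
      moreover have "W m k = xs n \<otimes>\<^bsub>G\<^esub> a"
        using e_in by (simp add: a_def xs_def W_def m_assoc[symmetric])
      ultimately show ?thesis unfolding l_coset_def by auto
    qed
    have "\<not> sparse G A"
    proof
      assume sp: "sparse G A"
      have "range xs \<subseteq> carrier G" "infinite (range xs)"
        using \<open>inj xs\<close> e_in by (auto simp: xs_def dest: finite_imageD)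
      then obtain F where F: "F \<subseteq> range xs" "finite F" "finite (\<Inter>g\<in>F. g <#\<^bsub>G\<^esub> A)"
        using sp unfolding sparse_def by blast
      obtain C where C: "finite C" "F = xs ` C" using F finite_subset_image[of F xs UNIV] by auto
      define m where "m = Max C"
      have "range (W m) \<subseteq> (\<Inter>g\<in>F. g <#\<^bsub>G\<^esub> A)"
      proof (rule subsetI)
        fix z assume "z \<in> range (W m)"
        then obtain k where zk: "z = W m k" by blast
        show "z \<in> (\<Inter>g\<in>F. g <#\<^bsub>G\<^esub> A)"
        proof (rule INT_I)
          fix g assume "g \<in> F"
          then obtain n where n: "n \<in> C" "g = xs n" using C(2) by blast
          have "n \<le> m" unfolding m_def using Max_ge[OF C(1) n(1)] .
          then show "z \<in> g <#\<^bsub>G\<^esub> A" using Wmem[of n m k] zk n(2) by simp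
        qed
      qed
      then have "finite (range (W m))" by (rule finite_subset) (rule F(3))
      then have "finite (UNIV :: nat set)" by (rule finite_imageD) (rule Winj[of m])
      then show False by simp
    qed
    then show "c \<in> {c \<in> topspace (PG_top G). \<not> sparse G (set_of_char G c)}"
      using ctop A_def by auto
  next
    fix c assume cS: "c \<in> {c \<in> topspace (PG_top G). \<not> sparse G (set_of_char G c)}"
    then have ctop0: "c \<in> topspace (PG_top G)" and ns: "\<not> sparse G (set_of_char G c)" by blast+
    have ctop: "c \<in> extensional (carrier G)" using ctop0 unfolding topspace_PG by blast
    define A where "A = set_of_char G c"
    have Asub: "A \<subseteq> carrier G" by (auto simp: A_def set_of_char_def)
    have ns': "\<not> sparse G A" using ns unfolding A_def .
    have "\<exists>X. X \<subseteq> carrier G \<and> infinite X \<and>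
       (\<forall>F. F \<subseteq> X \<longrightarrow> finite F \<longrightarrow> F \<noteq> {} \<longrightarrow> infinite (\<Inter>g\<in>F. g <#\<^bsub>G\<^esub> A))"
    proof (rule ccontr)
      assume nX: "\<not> ?thesis"
      have "sparse G A" unfolding sparse_def
      proof (intro conjI allI impI)
        fix X :: "'a set" assume "X \<subseteq> carrier G \<and> infinite X"
        then show "\<exists>F. F \<subseteq> X \<and> finite F \<and> F \<noteq> {} \<and> finite (\<Inter>g\<in>F. g <#\<^bsub>G\<^esub> A)"
          using nX by blast
      qed (rule Asub)
      then show False using ns' by contradiction
    qed
    then obtain X where X: "X \<subseteq> carrier G" "infinite X"
      and Xp: "\<And>F. F \<subseteq> X \<Longrightarrow> finite F \<Longrightarrow> F \<noteq> {} \<Longrightarrow> infinite (\<Inter>g\<in>F. g <#\<^bsub>G\<^esub> A)"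
      by blast
    obtain xs :: "nat \<Rightarrow> 'a" where xs: "inj xs" "range xs \<subseteq> X"
      using infinite_countable_subset[OF X(2)] by blast
    have "\<exists>w::nat\<Rightarrow>'a. inj w \<and> range w \<subseteq> (\<Inter>g\<in>xs ` {..m}. g <#\<^bsub>G\<^esub> A)" for m
      using infinite_countable_subset[OF Xp[of "xs ` {..m}"]] xs by auto
    then obtain w :: "nat \<Rightarrow> nat \<Rightarrow> 'a" where w: "\<And>m. inj (w m)"
      "\<And>m. range (w m) \<subseteq> (\<Inter>g\<in>xs ` {..m}. g <#\<^bsub>G\<^esub> A)"
      by metis
    have xsin: "xs n \<in> carrier G" for n using xs X by auto
    have wmem: "\<exists>a\<in>A. w m k = xs n \<otimes>\<^bsub>G\<^esub> a" if "n \<le> m" for m k n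
      using w(2)[of m] that unfolding l_coset_def by blast
    have win: "w m k \<in> carrier G" for m k
      using wmem[of 0 m k] xsin Asub by auto
    define y where "y = (\<lambda>j::nat. if j mod 3 = 0 then (if c (e (j div 3)) then 1 else (0::real))
        else if j mod 3 = 1 then real (idx (xs (j div 3)))
        else real (idx (w (fst (prod_decode (j div 3))) (snd (prod_decode (j div 3))))))"
    have y1: "y (3 * i) = (if c (e i) then 1 else 0)" for i by (simp add: y_def div3_facts)
    have y2: "y (Suc (3 * i)) = real (idx (xs i))" for i by (simp add: y_def div3_facts)
    have y3: "y (Suc (Suc (3 * prod_encode(m,k)))) = real (idx (w m k))" for m k
      by (simp add: y_def div3_facts numeral_2_eq_2)
    have "y \<in> T" unfolding T_def
    proof (intro CollectI conjI allI)
      fix i show "y i \<in> Nr" unfolding y_def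
        by (metis Nr_real of_nat_0 of_nat_1)
    next
      fix q :: "nat \<times> nat \<times> nat \<times> nat \<times> nat \<times> nat \<times> nat"
      obtain i i' m k k' n u where q: "q = (i,i',m,k,k',n,u)" by (cases q) auto
      have "idx (xs i) \<noteq> idx (xs i')" if "i \<noteq> i'"
        using that xs(1) e_idx[OF xsin[of i]] e_idx[OF xsin[of i']] by (metis injD)
      moreover have "idx (w m k) \<noteq> idx (w m k')" if "k \<noteq> k'"
        using that w(1)[of m] e_idx[OF win[of m k]] e_idx[OF win[of m k']] by (metis injD)
      moreover have "c (e u)" if nm: "n \<le> m" "idx (inv\<^bsub>G\<^esub> (xs n) \<otimes>\<^bsub>G\<^esub> w m k) = u"
      proof -
        obtain a where a: "a \<in> A" "w m k = xs n \<otimes>\<^bsub>G\<^esub> a" using wmem[OF nm(1)] by blast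
        have ac: "a \<in> carrier G" using a Asub by auto
        have "inv\<^bsub>G\<^esub> (xs n) \<otimes>\<^bsub>G\<^esub> w m k = a" using a(2) ac xsin
          by (simp add: m_assoc[symmetric])
        then have "e u = a" using nm(2) e_idx[OF ac] by simp
        then show ?thesis using a(1) by (simp add: A_def set_of_char_def)
      qed
      ultimately show "R q y" unfolding q R_def
        by (auto simp: y1 y2 y3 e_idx xsin win)
    qed
    moreover have "f y = c"
    proof
      fix a show "f y a = c a"
        using ctop by (auto simp: f_def y1 e_idx extensional_def)
    qed
    ultimately show "c \<in> f ` T" by blast
  qed
  then show ?thesis using analytic_closed[OF clT cont] by blast
qed

lemma analytic_empty: "analytic_in X {}"
  by (rule analytic_closed[of "{}" X "\<lambda>_. undefined"]) (auto simp: continuous_map_def)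

theorem theorem3p3:
  fixes G :: "('a, 'm) monoid_scheme"
  assumes "group G" and "countable (carrier G)"
  shows "coanalytic_in (PG_top G) {c \<in> topspace (PG_top G). sparse G (set_of_char G c)} \<and>
         analytic_in (PG_top G) {c \<in> topspace (PG_top G). P_small G (set_of_char G c)}"
proof (cases "finite (carrier G)")
  case True
  have e1: "{c \<in> topspace (PG_top G). P_small G (set_of_char G c)} = {}"
    using True by (auto simp: P_small_def dest: finite_imageD finite_subset)
  have e2: "topspace (PG_top G) - {c \<in> topspace (PG_top G). sparse G (set_of_char G c)} = {}"
    using True by (auto simp: sparse_def set_of_char_def dest: finite_subset)
  have s: "{c \<in> topspace (PG_top G). sparse G (set_of_char G c)} \<subseteq> topspace (PG_top G)" by blast
  show ?thesis unfolding coanalytic_in_def e1 e2 using s analytic_empty by blast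
next
  case False
  have e: "bij_betw (from_nat_into (carrier G)) UNIV (carrier G)"
    using bij_betw_from_nat_into[OF assms(2) False] .
  have "topspace (PG_top G) - {c \<in> topspace (PG_top G). sparse G (set_of_char G c)}
       = {c \<in> topspace (PG_top G). \<not> sparse G (set_of_char G c)}" by auto
  then show ?thesis
    using nonsparse_analytic[OF assms(1) e] psmall_analytic[OF assms(1) e]
    by (simp add: coanalytic_in_def)
qed

end
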